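(* Let $\mathbb{K}$ be a field, $R=\mathbb{K}\langle x,y\rangle/(xy-1)$, $I=\langle1-yx\rangle$. Let $\mathcal{C}$ be the category of weak splitting pairs and let $\Gamma$ be the quiver with vertices $u,v$, an arrow $e:v\to u$ and a loop $f$ at $v$. For a weak splitting pair $\pi=(M,\alpha)$ define the $\Gamma$-representation $\Xi(\pi)=(M_0,\operatorname{im}\alpha,\psi_e,\psi_f)$, and for a morphism $\varphi:(M,\alpha)\to(N,\beta)$ in $\mathcal{C}$ let $\Xi(\varphi)$ consist of the restrictions $\varphi|_{M_0}:M_0\to N_0$ and $\varphi|_{\operatorname{im}\alpha}:\operatorname{im}\alpha\to\operatorname{im}\beta$. Then $\Xi$ is a well-defined functor $\mathcal{C}\to\operatorname{Rep}(\Gamma)$, and after corestriction it is a functor $\Xi:\mathcal{C}\to\mathcal{D}$, where $\mathcal{D}$ is the full subcategory of $\operatorname{Rep}(\Gamma)$ of representations in which the map on the loop $f$ is invertible.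
   Context: A weak splitting pair is a pair $(M,\alpha)$ where $M$ is a left $R$-module and $\alpha:M/IM\to M$ is a $\mathbb{K}[x]$-linear splitting of the canonical projection $M\to M/IM$ (so $M=IM\oplus\operatorname{im}\alpha$ as $\mathbb{K}[x]$-modules). Morphisms $(M,\alpha)\to(N,\beta)$ in $\mathcal{C}$ are $R$-module homomorphisms $\varphi:M\to N$ with $\operatorname{im}(\varphi\circ\alpha)\subseteq\operatorname{im}\beta$. For an $R$-module $N$, $N_0=\{n\in N: xn=0\}$. For $m\in\operatorname{im}\alpha$ write $ym=m_1+m_2$ with $m_1\in IM$, $m_2\in\operatorname{im}\alpha$ (then $xm_1=0$); $\psi_e:\operatorname{im}\alpha\to M_0$ is $m\mapsto m_1$, and $\psi_f:\operatorname{im}\alpha\to\operatorname{im}\alpha$ is left multiplication by $x$. A representation of $\Gamma$ is a quadruple $(M_u,M_v,\psi_e:M_v\to M_u,\psi_f:M_v\to M_v)$ of vector spaces and linear maps; morphisms are pairs of linear maps commuting with $\psi_e,\psi_f$. *)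

theory Defs
  imports Main "HOL.Vector_Spaces" "HOL-Library.FuncSet"
begin

text \<open>A left module over R = K<x,y>/(xy-1) is a K-vector space (on the carrier type) with
  two K-linear endomorphisms X (action of x) and Y (action of y) such that X (Y m) = m.\<close>
definition jmod :: "('k::field \<Rightarrow> 'a::ab_group_add \<Rightarrow> 'a) \<Rightarrow> ('a \<Rightarrow> 'a) \<Rightarrow> ('a \<Rightarrow> 'a) \<Rightarrow> bool" where
  "jmod s X Y \<longleftrightarrow> vector_space s \<and> Vector_Spaces.linear s s X \<and> Vector_Spaces.linear s s Y
     \<and> (\<forall>m. X (Y m) = m)"

text \<open>IM for the two-sided ideal I = <1 - yx>: the R-submodule of M generated by
  the elements (1 - yx) m (since I = R(1-yx)R and RM = M).\<close>
definition IM :: "('k::field \<Rightarrow> 'a::ab_group_add \<Rightarrow> 'a) \<Rightarrow> ('a \<Rightarrow> 'a) \<Rightarrow> ('a \<Rightarrow> 'a) \<Rightarrow> 'a set" where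
  "IM s X Y = \<Inter>{S. module.subspace s S \<and> X ` S \<subseteq> S \<and> Y ` S \<subseteq> S
                     \<and> range (\<lambda>m. m - Y (X m)) \<subseteq> S}"

text \<open>The map alpha : M/IM \<rightarrow> M is represented by its
  composite a = alpha \<circ> p with the projection p : M \<rightarrow> M/IM; i.e. a is K-linear, vanishes on IM
  (factors through M/IM), commutes with x (K[x]-linearity, x acting on M/IM via [m] \<mapsto> [xm]),
  and p \<circ> alpha = id, i.e. a m - m \<in> IM.  Then im alpha = range a.\<close>
definition wsp :: "('k::field \<Rightarrow> 'a::ab_group_add \<Rightarrow> 'a) \<Rightarrow> ('a \<Rightarrow> 'a) \<Rightarrow> ('a \<Rightarrow> 'a) \<Rightarrow> ('a \<Rightarrow> 'a) \<Rightarrow> bool" where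
  "wsp s X Y a \<longleftrightarrow> jmod s X Y \<and> Vector_Spaces.linear s s a
     \<and> (\<forall>m \<in> IM s X Y. a m = 0)
     \<and> (\<forall>m. a (X m) = X (a m))
     \<and> (\<forall>m. a m - m \<in> IM s X Y)"

definition wsp_hom :: "('k::field \<Rightarrow> 'a::ab_group_add \<Rightarrow> 'a) \<Rightarrow> ('a \<Rightarrow> 'a) \<Rightarrow> ('a \<Rightarrow> 'a) \<Rightarrow> ('a \<Rightarrow> 'a)
     \<Rightarrow> ('k \<Rightarrow> 'b::ab_group_add \<Rightarrow> 'b) \<Rightarrow> ('b \<Rightarrow> 'b) \<Rightarrow> ('b \<Rightarrow> 'b) \<Rightarrow> ('b \<Rightarrow> 'b)
     \<Rightarrow> ('a \<Rightarrow> 'b) \<Rightarrow> bool" where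
  "wsp_hom s X Y a t X' Y' b phi \<longleftrightarrow>
     Vector_Spaces.linear s t phi \<and> (\<forall>m. phi (X m) = X' (phi m)) \<and> (\<forall>m. phi (Y m) = Y' (phi m))
     \<and> phi ` range a \<subseteq> range b"

definition M0 :: "('a::ab_group_add \<Rightarrow> 'a) \<Rightarrow> 'a set" where
  "M0 X = {m. X m = 0}"

definition psi_e :: "('k::field \<Rightarrow> 'a::ab_group_add \<Rightarrow> 'a) \<Rightarrow> ('a \<Rightarrow> 'a) \<Rightarrow> ('a \<Rightarrow> 'a) \<Rightarrow> ('a \<Rightarrow> 'a)
     \<Rightarrow> 'a \<Rightarrow> 'a" where
  "psi_e s X Y a m = (THE m1. m1 \<in> IM s X Y \<and> Y m - m1 \<in> range a)"

definition lin_on :: "('k::field \<Rightarrow> 'a::ab_group_add \<Rightarrow> 'a) \<Rightarrow> ('k \<Rightarrow> 'b::ab_group_add \<Rightarrow> 'b)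
     \<Rightarrow> 'a set \<Rightarrow> ('a \<Rightarrow> 'b) \<Rightarrow> bool" where
  "lin_on s t A f \<longleftrightarrow> (\<forall>p\<in>A. \<forall>q\<in>A. f (p + q) = f p + f q) \<and> (\<forall>c. \<forall>p\<in>A. f (s c p) = t c (f p))"

text \<open>Representations of Gamma (vertices u, v; arrow e : v \<rightarrow> u; loop f at v),
  realised on subspaces Mu, Mv of an ambient K-vector space.\<close>
definition gamma_rep :: "('k::field \<Rightarrow> 'a::ab_group_add \<Rightarrow> 'a) \<Rightarrow> 'a set \<times> 'a set \<times> ('a \<Rightarrow> 'a) \<times> ('a \<Rightarrow> 'a) \<Rightarrow> bool" where
  "gamma_rep s R \<longleftrightarrow> (case R of (Mu, Mv, pe, pf) \<Rightarrow>
     vector_space s \<and> module.subspace s Mu \<and> module.subspace s Mv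
     \<and> pe \<in> Mv \<rightarrow> Mu \<and> lin_on s s Mv pe \<and> pf \<in> Mv \<rightarrow> Mv \<and> lin_on s s Mv pf)"

definition gamma_rep_D :: "('k::field \<Rightarrow> 'a::ab_group_add \<Rightarrow> 'a) \<Rightarrow> 'a set \<times> 'a set \<times> ('a \<Rightarrow> 'a) \<times> ('a \<Rightarrow> 'a) \<Rightarrow> bool" where
  "gamma_rep_D s R \<longleftrightarrow> gamma_rep s R \<and> (case R of (Mu, Mv, pe, pf) \<Rightarrow> bij_betw pf Mv Mv)"

definition gamma_hom :: "('k::field \<Rightarrow> 'a::ab_group_add \<Rightarrow> 'a) \<Rightarrow> ('k \<Rightarrow> 'b::ab_group_add \<Rightarrow> 'b)
     \<Rightarrow> 'a set \<times> 'a set \<times> ('a \<Rightarrow> 'a) \<times> ('a \<Rightarrow> 'a)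
     \<Rightarrow> 'b set \<times> 'b set \<times> ('b \<Rightarrow> 'b) \<times> ('b \<Rightarrow> 'b)
     \<Rightarrow> ('a \<Rightarrow> 'b) \<times> ('a \<Rightarrow> 'b) \<Rightarrow> bool" where
  "gamma_hom s t R S g \<longleftrightarrow> (case R of (Mu, Mv, pe, pf) \<Rightarrow> case S of (Nu, Nv, qe, qf) \<Rightarrow>
     case g of (gu, gv) \<Rightarrow>
       gu \<in> Mu \<rightarrow> Nu \<and> lin_on s t Mu gu \<and> gv \<in> Mv \<rightarrow> Nv \<and> lin_on s t Mv gv
       \<and> (\<forall>m\<in>Mv. gu (pe m) = qe (gv m)) \<and> (\<forall>m\<in>Mv. gv (pf m) = qf (gv m)))"

definition gamma_id :: "'a set \<times> 'a set \<times> ('a \<Rightarrow> 'a) \<times> ('a \<Rightarrow> 'a) \<Rightarrow> ('a \<Rightarrow> 'a) \<times> ('a \<Rightarrow> 'a)" where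
  "gamma_id R = (case R of (Mu, Mv, pe, pf) \<Rightarrow> (restrict id Mu, restrict id Mv))"

definition gamma_comp :: "'a set \<times> 'a set \<times> ('a \<Rightarrow> 'a) \<times> ('a \<Rightarrow> 'a)
     \<Rightarrow> ('b \<Rightarrow> 'c) \<times> ('b \<Rightarrow> 'c) \<Rightarrow> ('a \<Rightarrow> 'b) \<times> ('a \<Rightarrow> 'b) \<Rightarrow> ('a \<Rightarrow> 'c) \<times> ('a \<Rightarrow> 'c)" where
  "gamma_comp R h g = (case R of (Mu, Mv, pe, pf) \<Rightarrow>
     (compose Mu (fst h) (fst g), compose Mv (snd h) (snd g)))"

definition Xi_obj :: "('k::field \<Rightarrow> 'a::ab_group_add \<Rightarrow> 'a) \<Rightarrow> ('a \<Rightarrow> 'a) \<Rightarrow> ('a \<Rightarrow> 'a) \<Rightarrow> ('a \<Rightarrow> 'a)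
     \<Rightarrow> 'a set \<times> 'a set \<times> ('a \<Rightarrow> 'a) \<times> ('a \<Rightarrow> 'a)" where
  "Xi_obj s X Y a = (M0 X, range a, psi_e s X Y a, X)"

definition Xi_hom :: "('a::ab_group_add \<Rightarrow> 'a) \<Rightarrow> ('a \<Rightarrow> 'a) \<Rightarrow> ('a \<Rightarrow> 'b) \<Rightarrow> ('a \<Rightarrow> 'b) \<times> ('a \<Rightarrow> 'b)" where
  "Xi_hom X a phi = (restrict phi (M0 X), restrict phi (range a))"

end

theory Submission
  imports Defs
begin

lemma lin_add: "Vector_Spaces.linear s t f \<Longrightarrow> f (x + y) = f x + f y"
  by (simp add: linear_iff)
lemma lin_scale: "Vector_Spaces.linear s t f \<Longrightarrow> f (s c x) = t c (f x)"
  by (simp add: linear_iff)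
lemma lin_vs1: "Vector_Spaces.linear s t f \<Longrightarrow> vector_space s"
  by (simp add: linear_iff)
lemma lin_diff: "Vector_Spaces.linear s t f \<Longrightarrow> f (x - y) = f x - f y"
proof -
  assume l: "Vector_Spaces.linear s t f"
  have "f x = f ((x - y) + y)" by simp
  also have "\<dots> = f (x - y) + f y" using lin_add[OF l] .
  finally show ?thesis by (simp add: algebra_simps)
qed
lemma lin_zero: "Vector_Spaces.linear s t f \<Longrightarrow> f 0 = 0"
  using lin_diff[of s t f 0 0] by simp

lemma vs_scale0: "vector_space s \<Longrightarrow> s c 0 = 0"
  using module.scale_zero_right[of s c] by (simp add: module_iff_vector_space)
lemma vs_scale_diff: "vector_space s \<Longrightarrow> s c (x - y) = s c x - s c y"
  using module.scale_right_diff_distrib[of s c x y] by (simp add: module_iff_vector_space)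

lemma subsp_iff: "vector_space s \<Longrightarrow> module.subspace s S \<longleftrightarrow>
   0 \<in> S \<and> (\<forall>x\<in>S. \<forall>y\<in>S. x + y \<in> S) \<and> (\<forall>c. \<forall>x\<in>S. s c x \<in> S)"
  by (simp add: module.subspace_def module_iff_vector_space)

lemma subsp_diff: "vector_space s \<Longrightarrow> module.subspace s S \<Longrightarrow> x \<in> S \<Longrightarrow> y \<in> S \<Longrightarrow> x - y \<in> S"
  using module.subspace_diff[of s S x y] by (simp add: module_iff_vector_space)

lemma IM_min: "module.subspace s S \<Longrightarrow> X ` S \<subseteq> S \<Longrightarrow> Y ` S \<subseteq> S
   \<Longrightarrow> range (\<lambda>m. m - Y (X m)) \<subseteq> S \<Longrightarrow> IM s X Y \<subseteq> S"
  unfolding IM_def by blast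

lemma IM_gen: "m - Y (X m) \<in> IM s X Y"
  unfolding IM_def by blast

lemma IM_X: "m \<in> IM s X Y \<Longrightarrow> X m \<in> IM s X Y"
  unfolding IM_def by blast
lemma IM_Y: "m \<in> IM s X Y \<Longrightarrow> Y m \<in> IM s X Y"
  unfolding IM_def by blast

lemma IM_subspace: "vector_space s \<Longrightarrow> module.subspace s (IM s X Y)"
  unfolding IM_def
  by (rule module.subspace_Inter) (auto simp: module_iff_vector_space)

lemma range_subspace: "Vector_Spaces.linear s s a \<Longrightarrow> module.subspace s (range a)"
proof -
  assume l: "Vector_Spaces.linear s s a"
  have vs: "vector_space s" using lin_vs1[OF l] .
  show ?thesis unfolding subsp_iff[OF vs]
  proof (intro conjI ballI allI)
    show "0 \<in> range a" using lin_zero[OF l] by (metis rangeI)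
    fix x y assume "x \<in> range a" "y \<in> range a"
    then obtain p q where "x = a p" "y = a q" by auto
    then show "x + y \<in> range a" using lin_add[OF l, of p q] by (metis rangeI)
  next
    fix c x assume "x \<in> range a"
    then obtain p where "x = a p" by auto
    then show "s c x \<in> range a" using lin_scale[OF l, of c p] by (metis rangeI)
  qed
qed

context
  fixes s :: "'k::field \<Rightarrow> 'a::ab_group_add \<Rightarrow> 'a" and X Y a
  assumes w: "wsp s X Y a"
begin

lemma W: "vector_space s" "Vector_Spaces.linear s s X" "Vector_Spaces.linear s s Y"
  "\<And>m. X (Y m) = m" "Vector_Spaces.linear s s a" "\<And>m. m \<in> IM s X Y \<Longrightarrow> a m = 0"
  "\<And>m. a (X m) = X (a m)" "\<And>m. a m - m \<in> IM s X Y"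
  using w by (auto simp: wsp_def jmod_def)

lemma a_idem: "a (a m) = a m"
  using lin_diff[OF W(5), of "a m" m] W(6)[OF W(8)[of m]] by simp

lemma IMsub: "module.subspace s (IM s X Y)" using IM_subspace[OF W(1)] .

lemma range_IM: "n \<in> range a \<Longrightarrow> n \<in> IM s X Y \<Longrightarrow> n = 0"
  using a_idem W(6) by (metis imageE)

lemma neg_IM: "m - a m \<in> IM s X Y"
proof -
  have "0 - (a m - m) \<in> IM s X Y"
    using subsp_diff[OF W(1) IMsub] subsp_iff[OF W(1)] IMsub W(8) by blast
  then show ?thesis by simp
qed

lemma psi_e_eq: "psi_e s X Y a m = Y m - a (Y m)"
  unfolding psi_e_def
proof (rule the_equality)
  show "Y m - a (Y m) \<in> IM s X Y \<and> Y m - (Y m - a (Y m)) \<in> range a"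
    using neg_IM by auto
next
  fix m1 assume h: "m1 \<in> IM s X Y \<and> Y m - m1 \<in> range a"
  have d1: "m1 - (Y m - a (Y m)) \<in> IM s X Y"
    using subsp_diff[OF W(1) IMsub] h neg_IM by blast
  have d2: "(Y m - (Y m - a (Y m))) - (Y m - m1) \<in> range a"
    using subsp_diff[OF W(1) range_subspace[OF W(5)]] h by auto
  have "m1 - (Y m - a (Y m)) = (Y m - (Y m - a (Y m))) - (Y m - m1)"
    by (simp add: algebra_simps)
  then have "m1 - (Y m - a (Y m)) = 0" using d1 d2 range_IM by metis
  then show "m1 = Y m - a (Y m)" by simp
qed


lemma M0_subspace: "module.subspace s (M0 X)"
  unfolding subsp_iff[OF W(1)] M0_def
  using lin_zero[OF W(2)] lin_add[OF W(2)] lin_scale[OF W(2)] W(2)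
  by (auto simp: linear_iff vs_scale0)

lemma psi_M0: "m \<in> range a \<Longrightarrow> psi_e s X Y a m \<in> M0 X"
proof -
  assume "m \<in> range a"
  then obtain n where n: "m = a n" by auto
  have "X (psi_e s X Y a m) = X (Y m) - X (a (Y m))"
    unfolding psi_e_eq using lin_diff[OF W(2)] .
  also have "\<dots> = m - a m" using W(4) W(7) by metis
  also have "\<dots> = 0" using n a_idem by simp
  finally show ?thesis unfolding M0_def by simp
qed

lemma X_range: "m \<in> range a \<Longrightarrow> X m \<in> range a"
  using W(7) by (metis imageE rangeI)

lemma X_bij: "bij_betw X (range a) (range a)"
proof (rule bij_betw_imageI)
  show "inj_on X (range a)"
  proof (rule inj_onI)
    fix p q assume p: "p \<in> range a" and q: "q \<in> range a" and e: "X p = X q"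
    have "p - q \<in> range a" using subsp_diff[OF W(1) range_subspace[OF W(5)]] p q by blast
    then obtain n where n: "p - q = a n" by auto
    have x0: "X (a n) = 0" using e lin_diff[OF W(2), of p q] n by simp
    have "a n = a (a n)" using a_idem by simp
    also have "\<dots> = a (Y (X (a n)))"
      using lin_diff[OF W(5), of "a n" "Y (X (a n))"] W(6)[OF IM_gen[of "a n" Y X s]] by simp
    also have "\<dots> = 0" using x0 lin_zero[OF W(3)] lin_zero[OF W(5)] by simp
    finally show "p = q" using n by simp
  qed
  show "X ` range a = range a"
  proof
    show "X ` range a \<subseteq> range a" using X_range by blast
    show "range a \<subseteq> X ` range a"
    proof
      fix m assume "m \<in> range a"
      then obtain n where n: "m = a n" by auto
      have "X (a (Y n)) = m" using W(7)[of "Y n"] W(4) n by simp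
      then show "m \<in> X ` range a" by (metis rangeI image_eqI)
    qed
  qed
qed

lemma Xi_rep: "gamma_rep s (Xi_obj s X Y a)"
  unfolding gamma_rep_def Xi_obj_def lin_on_def
  using W(1) M0_subspace range_subspace[OF W(5)] psi_M0 X_range
    lin_add[OF W(2)] lin_scale[OF W(2)]
    lin_add[OF W(3)] lin_scale[OF W(3)] lin_add[OF W(5)] lin_scale[OF W(5)]
  by (auto simp: psi_e_eq Pi_def algebra_simps lin_diff[OF W(5)] lin_diff[OF W(3)]
     vs_scale_diff[OF W(1)])

lemma Xi_D: "gamma_rep_D s (Xi_obj s X Y a)"
  unfolding gamma_rep_D_def using Xi_rep X_bij by (simp add: Xi_obj_def)

end


lemma hom_IM:
  assumes wa: "wsp s X Y a" and wb: "wsp t X' Y' b" and h: "wsp_hom s X Y a t X' Y' b phi"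
  shows "phi ` IM s X Y \<subseteq> IM t X' Y'"
proof -
  have l: "Vector_Spaces.linear s t phi" and hx: "\<And>m. phi (X m) = X' (phi m)"
    and hy: "\<And>m. phi (Y m) = Y' (phi m)" using h by (auto simp: wsp_hom_def)
  have S: "module.subspace t (IM t X' Y')" using IMsub[OF wb] .
  have "IM s X Y \<subseteq> phi -` IM t X' Y'"
  proof (rule IM_min)
    show "module.subspace s (phi -` IM t X' Y')"
      unfolding subsp_iff[OF W(1)[OF wa]]
      using S[unfolded subsp_iff[OF W(1)[OF wb]]] lin_zero[OF l] lin_add[OF l] lin_scale[OF l]
      by auto
    show "X ` (phi -` IM t X' Y') \<subseteq> phi -` IM t X' Y'" using hx IM_X by auto
    show "Y ` (phi -` IM t X' Y') \<subseteq> phi -` IM t X' Y'" using hy IM_Y by auto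
    show "range (\<lambda>m. m - Y (X m)) \<subseteq> phi -` IM t X' Y'"
      using lin_diff[OF l] hx hy IM_gen by auto
  qed
  then show ?thesis by blast
qed

lemma hom_a:
  assumes wa: "wsp s X Y a" and wb: "wsp t X' Y' b" and h: "wsp_hom s X Y a t X' Y' b phi"
  shows "b (phi n) = phi (a n)"
proof -
  have l: "Vector_Spaces.linear s t phi" and r: "phi ` range a \<subseteq> range b"
    using h by (auto simp: wsp_hom_def)
  have e: "phi n = phi (a n) + phi (n - a n)" using lin_diff[OF l] by simp
  obtain k where k: "phi (a n) = b k" using r by blast
  have "phi (n - a n) \<in> IM t X' Y'" using hom_IM[OF wa wb h] neg_IM[OF wa] by blast
  then have "b (phi (n - a n)) = 0" using W(6)[OF wb] by blast
  have "b (phi n) = b (phi (a n)) + b (phi (n - a n))"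
    using e lin_add[OF W(5)[OF wb]] by metis
  also have "b (phi (a n)) = phi (a n)" using k a_idem[OF wb] by simp
  finally show ?thesis using \<open>b (phi (n - a n)) = 0\<close> by simp
qed

lemma hom_M0:
  assumes h: "wsp_hom s X Y a t X' Y' b phi"
  shows "m \<in> M0 X \<Longrightarrow> phi m \<in> M0 X'"
proof -
  assume "m \<in> M0 X"
  then have "X m = 0" by (simp add: M0_def)
  moreover have "phi (X m) = X' (phi m)" "Vector_Spaces.linear s t phi" using h by (auto simp: wsp_hom_def)
  ultimately show ?thesis using lin_zero[of s t phi] by (simp add: M0_def)
qed

lemma hom_range:
  assumes h: "wsp_hom s X Y a t X' Y' b phi"
  shows "m \<in> range a \<Longrightarrow> phi m \<in> range b"
  using h by (auto simp: wsp_hom_def)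

lemma Xi_gamma_hom:
  assumes wa: "wsp s X Y a" and wb: "wsp t X' Y' b" and h: "wsp_hom s X Y a t X' Y' b phi"
  shows "gamma_hom s t (Xi_obj s X Y a) (Xi_obj t X' Y' b) (Xi_hom X a phi)"
proof -
  have l: "Vector_Spaces.linear s t phi" and hx: "\<And>m. phi (X m) = X' (phi m)"
    and hy: "\<And>m. phi (Y m) = Y' (phi m)" using h by (auto simp: wsp_hom_def)
  have M0s: "module.subspace s (M0 X)" using M0_subspace[OF wa] .
  have Rs: "module.subspace s (range a)" using range_subspace[OF W(5)[OF wa]] .
  note M0s' = M0s[unfolded subsp_iff[OF W(1)[OF wa]]]
  note Rs' = Rs[unfolded subsp_iff[OF W(1)[OF wa]]]
  have pe: "\<And>m. m \<in> range a \<Longrightarrow> phi (psi_e s X Y a m) = psi_e t X' Y' b (phi m)"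
  proof -
    fix m
    have "phi (psi_e s X Y a m) = phi (Y m) - phi (a (Y m))"
      unfolding psi_e_eq[OF wa] by (rule lin_diff[OF l])
    also have "\<dots> = Y' (phi m) - b (phi (Y m))" using hom_a[OF wa wb h, of "Y m"] hy[of m] by simp
    also have "\<dots> = psi_e t X' Y' b (phi m)" by (simp add: psi_e_eq[OF wb] hy)
    finally show "phi (psi_e s X Y a m) = psi_e t X' Y' b (phi m)" .
  qed
  have A: "restrict phi (M0 X) \<in> M0 X \<rightarrow> M0 X'" using hom_M0[OF h] by auto
  have B: "lin_on s t (M0 X) (restrict phi (M0 X))"
    unfolding lin_on_def using M0s' lin_add[OF l] lin_scale[OF l] by simp
  have C: "restrict phi (range a) \<in> range a \<rightarrow> range b" using hom_range[OF h] by auto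
  have D: "lin_on s t (range a) (restrict phi (range a))"
    unfolding lin_on_def using Rs' lin_add[OF l] lin_scale[OF l] by simp
  have E: "\<forall>m\<in>range a. restrict phi (M0 X) (psi_e s X Y a m)
              = psi_e t X' Y' b (restrict phi (range a) m)"
    using psi_M0[OF wa] pe by simp
  have F: "\<forall>m\<in>range a. restrict phi (range a) (X m) = X' (restrict phi (range a) m)"
    using X_range[OF wa] hx by simp
  show ?thesis
    unfolding gamma_hom_def Xi_obj_def Xi_hom_def using A B C D E F by simp
qed

theorem theorem5:
  fixes s :: "'k::field \<Rightarrow> 'a::ab_group_add \<Rightarrow> 'a"
    and t :: "'k \<Rightarrow> 'b::ab_group_add \<Rightarrow> 'b"
    and u :: "'k \<Rightarrow> 'c::ab_group_add \<Rightarrow> 'c"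
    and X Y a :: "'a \<Rightarrow> 'a" and X' Y' b :: "'b \<Rightarrow> 'b" and X'' Y'' c :: "'c \<Rightarrow> 'c"
    and phi :: "'a \<Rightarrow> 'b" and chi :: "'b \<Rightarrow> 'c"
  shows
    "(wsp s X Y a \<longrightarrow> gamma_rep s (Xi_obj s X Y a) \<and> gamma_rep_D s (Xi_obj s X Y a))
     \<and> (wsp s X Y a \<and> wsp t X' Y' b \<and> wsp_hom s X Y a t X' Y' b phi
          \<longrightarrow> gamma_hom s t (Xi_obj s X Y a) (Xi_obj t X' Y' b) (Xi_hom X a phi))
     \<and> (wsp s X Y a \<longrightarrow> Xi_hom X a id = gamma_id (Xi_obj s X Y a))
     \<and> (wsp s X Y a \<and> wsp t X' Y' b \<and> wsp u X'' Y'' c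
          \<and> wsp_hom s X Y a t X' Y' b phi \<and> wsp_hom t X' Y' b u X'' Y'' c chi
          \<longrightarrow> Xi_hom X a (chi \<circ> phi)
                = gamma_comp (Xi_obj s X Y a) (Xi_hom X' b chi) (Xi_hom X a phi))"
proof (intro conjI impI)
  assume "wsp s X Y a" then show "gamma_rep s (Xi_obj s X Y a)" by (rule Xi_rep)
next
  assume "wsp s X Y a" then show "gamma_rep_D s (Xi_obj s X Y a)" by (rule Xi_D)
next
  assume "wsp s X Y a \<and> wsp t X' Y' b \<and> wsp_hom s X Y a t X' Y' b phi"
  then show "gamma_hom s t (Xi_obj s X Y a) (Xi_obj t X' Y' b) (Xi_hom X a phi)"
    using Xi_gamma_hom by blast
next
  show "Xi_hom X a id = gamma_id (Xi_obj s X Y a)"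
    by (simp add: Xi_hom_def gamma_id_def Xi_obj_def)
next
  assume H: "wsp s X Y a \<and> wsp t X' Y' b \<and> wsp u X'' Y'' c
          \<and> wsp_hom s X Y a t X' Y' b phi \<and> wsp_hom t X' Y' b u X'' Y'' c chi"
  then have h: "wsp_hom s X Y a t X' Y' b phi" by blast
  show "Xi_hom X a (chi \<circ> phi) = gamma_comp (Xi_obj s X Y a) (Xi_hom X' b chi) (Xi_hom X a phi)"
    unfolding Xi_hom_def gamma_comp_def Xi_obj_def
    using hom_M0[OF h] hom_range[OF h]
    by (auto simp: compose_def restrict_def fun_eq_iff)
qed

end
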